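(* Under the hypotheses of the preceding lemma ($\tau\in(3,5)$, $w_i=c_w(N/i)^{1/(\tau-1)}$, $\beta=\beta_{c,N}$, $\lambda=(\tau-2)/(\tau-1)$), for every $r\in\mathbb R$, \[ \lim_{N\to\infty}\int_{-\infty}^\infty e^{-NG_N(z/N^{1/(\tau-1)};r)}\,dz=\int_{-\infty}^\infty\exp\Big(zr\sqrt{\frac{\mathbb E[W]}{\nu}}-f\Big(\sqrt{\frac{\mathbb E[W]}{\nu}}z\Big)\Big)dz, \] with $f(x)=\sum_{i\ge1}\Big(\frac12\big(\frac{\tau-2}{\tau-1}x\,i^{-1/(\tau-1)}\big)^2-\log\cosh\big(\frac{\tau-2}{\tau-1}x\,i^{-1/(\tau-1)}\big)\Big)$.
   Context: $W_N=w_{U_N}$ with $U_N$ uniform on $[N]$; $W$ is the distributional limit of $W_N$, with $\mathbb P(W>w)=(w/c_w)^{-(\tau-1)}$ for $w\ge c_w$, $\mathbb E[W]=c_w\frac{\tau-1}{\tau-2}$. $\nu=\mathbb E[W^2]/\mathbb E[W]$, $\nu_N=\mathbb E[W_N^2]/\mathbb E[W_N]$, $\beta_{c,N}={\rm asinh}(1/\nu_N)$, $\alpha_N(\beta)=\sqrt{\sinh(\beta)/\mathbb E[W_N]}$, $G_N(z;r)=\frac12z^2-\frac1N\sum_{i\in[N]}\log\cosh\big(\alpha_N(\beta)w_iz+r/N^\lambda\big)$. *)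

theory Defs
  imports "HOL-Analysis.Analysis"
begin

definition wt :: "real \<Rightarrow> real \<Rightarrow> nat \<Rightarrow> nat \<Rightarrow> real" where
  "wt tau cw N i = cw * (real N / real i) powr (1 / (tau - 1))"

text \<open>E[W_N] and E[W_N^2] for W_N = w_{U_N}, U_N uniform on {1..N}.\<close>
definition EWN :: "real \<Rightarrow> real \<Rightarrow> nat \<Rightarrow> real" where
  "EWN tau cw N = (\<Sum>i\<in>{1..N}. wt tau cw N i) / real N"

definition EW2N :: "real \<Rightarrow> real \<Rightarrow> nat \<Rightarrow> real" where
  "EW2N tau cw N = (\<Sum>i\<in>{1..N}. (wt tau cw N i)^2) / real N"

definition nuN :: "real \<Rightarrow> real \<Rightarrow> nat \<Rightarrow> real" where
  "nuN tau cw N = EW2N tau cw N / EWN tau cw N"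

definition betacN :: "real \<Rightarrow> real \<Rightarrow> nat \<Rightarrow> real" where
  "betacN tau cw N = arsinh (1 / nuN tau cw N)"

definition alphaN :: "real \<Rightarrow> real \<Rightarrow> nat \<Rightarrow> real \<Rightarrow> real" where
  "alphaN tau cw N beta = sqrt (sinh beta / EWN tau cw N)"

definition GN :: "real \<Rightarrow> real \<Rightarrow> nat \<Rightarrow> real \<Rightarrow> real \<Rightarrow> real \<Rightarrow> real \<Rightarrow> real" where
  "GN tau cw N beta lambda z r =
     z^2 / 2 - (\<Sum>i\<in>{1..N}. ln (cosh (alphaN tau cw N beta * wt tau cw N i * z
                                        + r / real N powr lambda))) / real N"

text \<open>Limiting Pareto variable W: P(W > w) = (w/c_w)^(-(tau-1)), w >= c_w.\<close>
definition EW :: "real \<Rightarrow> real \<Rightarrow> real" where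
  "EW tau cw = cw * (tau - 1) / (tau - 2)"

definition EW2 :: "real \<Rightarrow> real \<Rightarrow> real" where
  "EW2 tau cw = cw^2 * (tau - 1) / (tau - 3)"

definition nu :: "real \<Rightarrow> real \<Rightarrow> real" where
  "nu tau cw = EW2 tau cw / EW tau cw"

definition flim :: "real \<Rightarrow> real \<Rightarrow> real" where
  "flim tau x = (\<Sum>i. let y = (tau - 2) / (tau - 1) * x * real (Suc i) powr (- 1 / (tau - 1))
                      in y^2 / 2 - ln (cosh y))"

end

theory Submission
  imports Defs "HOL-Real_Asymp.Real_Asymp" "HOL-Probability.Probability"
begin



lemma mono_by_deriv:
  fixes f f' :: "real \<Rightarrow> real"
  assumes "a \<le> b" "\<And>x. a \<le> x \<Longrightarrow> x \<le> b \<Longrightarrow> (f has_real_derivative f' x) (at x)"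
    "\<And>x. a \<le> x \<Longrightarrow> x \<le> b \<Longrightarrow> 0 \<le> f' x"
  shows "f a \<le> f b"
  using DERIV_nonneg_imp_nondecreasing[of a b f] assms by blast

lemma deriv_lncosh:
  "((\<lambda>x. ln (cosh (x::real))) has_real_derivative tanh x) (at x)"
proof -
  have "((\<lambda>x. ln (cosh (x::real))) has_real_derivative (1 / cosh x * sinh x)) (at x)"
    by (auto intro!: derivative_eq_intros)
  then show ?thesis by (simp add: tanh_def)
qed

lemma deriv_tanh: "(tanh has_real_derivative 1 - tanh x ^ 2) (at (x::real))"
proof -
  have "((\<lambda>x. sinh x / cosh x) has_real_derivative (cosh x * cosh x - sinh x * sinh x) / (cosh x * cosh x)) (at (x::real))"
    by (auto intro!: derivative_eq_intros)
  moreover have "(cosh x * cosh x - sinh x * sinh x) / (cosh x * cosh x) = 1 - tanh x ^ 2"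
    by (simp add: tanh_def field_simps power2_eq_square)
  ultimately show ?thesis by (simp add: tanh_def[abs_def])
qed

lemma tanh_le_id: assumes "0 \<le> (x::real)" shows "tanh x \<le> x"
proof -
  have "(\<lambda>t. t - tanh t) 0 \<le> (\<lambda>t. t - tanh t) x"
    by (rule mono_by_deriv[where f="\<lambda>t. t - tanh t" and a=0 and b=x and f'="\<lambda>t. tanh t ^ 2"])
       (use assms in \<open>auto intro!: derivative_eq_intros deriv_tanh\<close>)
  then show ?thesis by simp
qed

lemma tanh_lip: assumes "(x::real) \<le> y" shows "tanh y - tanh x \<le> y - x"
proof -
  have "(\<lambda>t. t - tanh t) x \<le> (\<lambda>t. t - tanh t) y"
    by (rule mono_by_deriv[where f="\<lambda>t. t - tanh t" and a=x and b=y and f'="\<lambda>t. tanh t ^ 2"])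
       (use assms in \<open>auto intro!: derivative_eq_intros deriv_tanh\<close>)
  then show ?thesis by simp
qed

lemma abs_tanh_le: "\<bar>tanh (x::real)\<bar> \<le> \<bar>x\<bar>"
  using tanh_le_id[of "\<bar>x\<bar>"] by simp

lemma tanh_lower: assumes "0 \<le> (x::real)" shows "x - x^3/3 \<le> tanh x"
proof -
  have "(\<lambda>t. tanh t - t + t^3/3) 0 \<le> (\<lambda>t. tanh t - t + t^3/3) x"
  proof (rule mono_by_deriv[where f="\<lambda>t. tanh t - t + t^3/3" and a=0 and b=x and f'="\<lambda>t. 1 - tanh t ^ 2 - 1 + t^2"])
    fix t :: real assume t: "0 \<le> t" "t \<le> x"
    show "((\<lambda>t. tanh t - t + t^3/3) has_real_derivative 1 - tanh t ^ 2 - 1 + t^2) (at t)"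
      by (auto intro!: derivative_eq_intros deriv_tanh)
    have "tanh t ^ 2 \<le> t^2" using tanh_le_id[OF t(1)] t(1)
      by (intro power_mono) auto
    then show "0 \<le> 1 - tanh t ^ 2 - 1 + t^2" by simp
  qed (use assms in auto)
  then show ?thesis by simp
qed

lemma id_minus_tanh: "\<bar>x - tanh (x::real)\<bar> \<le> x^2"
proof -
  have main: "\<bar>y - tanh y\<bar> \<le> y^2" if y: "0 \<le> y" for y :: real
  proof -
    have a: "0 \<le> y - tanh y" using tanh_le_id[OF y] by simp
    have b: "y - tanh y \<le> y^3/3" using tanh_lower[OF y] by simp
    have c: "y - tanh y \<le> y" using y by simp
    show ?thesis
    proof (cases "y \<le> 1")
      case True
      have "y^2 * y \<le> y^2 * 1" using True y by (intro mult_left_mono) auto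
      then have y3: "y^3 \<le> y^2" by (simp add: power3_eq_cube power2_eq_square)
      have "0 \<le> y^3" using y by simp
      then have "y^3/3 \<le> y^2" using y3 by linarith
      then show ?thesis using a b by simp
    next
      case False
      have "y \<le> y^2" using False by (simp add: power2_eq_square)
      then show ?thesis using a c by (simp only: abs_of_nonneg[OF a])
    qed
  qed
  show ?thesis
  proof (cases "0 \<le> x")
    case True then show ?thesis by (rule main)
  next
    case False
    have "\<bar>(-x) - tanh (-x)\<bar> \<le> (-x)^2" using False by (intro main) auto
    then show ?thesis by (simp add: abs_minus_commute)
  qed
qed

lemma lncosh_taylor:
  fixes a s :: real
  shows "0 \<le> ln (cosh (a+s)) - ln (cosh a) - s * tanh a"
    and "ln (cosh (a+s)) - ln (cosh a) - s * tanh a \<le> s^2/2"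
proof -
  define h where "h = (\<lambda>t. ln (cosh (a+t)) - ln (cosh a) - t * tanh a)"
  define k where "k = (\<lambda>t. h t - t^2/2)"
  have dh: "(h has_real_derivative tanh (a+t) - tanh a) (at t)" for t
    unfolding h_def
    by (auto intro!: derivative_eq_intros DERIV_chain2[OF deriv_lncosh] simp: tanh_def)
  have dk: "(k has_real_derivative tanh (a+t) - tanh a - t) (at t)" for t
    unfolding k_def by (auto intro!: derivative_eq_intros dh)
  have h0: "h 0 = 0" "k 0 = 0" by (simp_all add: h_def k_def)
  show "0 \<le> ln (cosh (a+s)) - ln (cosh a) - s * tanh a"
  proof (cases "0 \<le> s")
    case True
    have "h 0 \<le> h s" by (rule mono_by_deriv[OF True dh]) (simp)
    then show ?thesis using h0 by (simp add: h_def)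
  next
    case False
    have "(\<lambda>t. - h t) s \<le> (\<lambda>t. - h t) 0"
      by (rule mono_by_deriv[where f="\<lambda>t. - h t" and a=s and b=0 and f'="\<lambda>t. -(tanh (a+t) - tanh a)"])
         (use False in \<open>auto intro!: derivative_eq_intros dh\<close>)
    then show ?thesis using h0 by (simp add: h_def)
  qed
  show "ln (cosh (a+s)) - ln (cosh a) - s * tanh a \<le> s^2/2"
  proof (cases "0 \<le> s")
    case True
    have "(\<lambda>t. - k t) 0 \<le> (\<lambda>t. - k t) s"
    proof (rule mono_by_deriv[where f="\<lambda>t. - k t" and a=0 and b=s and f'="\<lambda>t. -(tanh (a+t) - tanh a - t)"])
      fix t assume "0 \<le> t" "t \<le> s"
      then show "0 \<le> -(tanh (a+t) - tanh a - t)" using tanh_lip[of a "a+t"] by simp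
    qed (use True in \<open>auto intro!: derivative_eq_intros dk\<close>)
    then show ?thesis using h0 by (simp add: k_def h_def)
  next
    case False
    have "k s \<le> k 0"
    proof (rule mono_by_deriv[OF _ dk])
      fix t assume "s \<le> t" "t \<le> 0"
      then show "0 \<le> tanh (a+t) - tanh a - t" using tanh_lip[of "a+t" a] by simp
    qed (use False in auto)
    then show ?thesis using h0 by (simp add: k_def h_def)
  qed
qed

definition gg :: "real \<Rightarrow> real" where "gg y = y^2/2 - ln (cosh y)"

lemma gg_even: "gg (-y) = gg y" by (simp add: gg_def)

lemma gg_nonneg: "0 \<le> gg y"
  using lncosh_taylor(2)[of 0 y] by (simp add: gg_def)

lemma gg_le4: "gg y \<le> y^4/12"
proof -
  have main: "gg y \<le> y^4/12" if y: "0 \<le> y" for y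
  proof -
    have "(\<lambda>t. ln (cosh t) - t^2/2 + t^4/12) 0 \<le> (\<lambda>t. ln (cosh t) - t^2/2 + t^4/12) y"
    proof (rule mono_by_deriv[where f="\<lambda>t. ln (cosh t) - t^2/2 + t^4/12" and a=0 and b=y and f'="\<lambda>t. tanh t - t + t^3/3"])
      fix t :: real assume "0 \<le> t" "t \<le> y"
      then show "0 \<le> tanh t - t + t^3/3" using tanh_lower[of t] by simp
    qed (use y in \<open>auto intro!: derivative_eq_intros deriv_lncosh simp: tanh_def\<close>)
    then show ?thesis by (simp add: gg_def)
  qed
  show ?thesis
  proof (cases "0 \<le> y")
    case True then show ?thesis by (rule main)
  next
    case False then show ?thesis using main[of "-y"] gg_even[of y] by simp
  qed
qed

lemma gg_mono: assumes "\<bar>x\<bar> \<le> \<bar>y\<bar>" shows "gg x \<le> gg y"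
proof -
  have main: "gg u \<le> gg v" if "0 \<le> u" "u \<le> v" for u v
  unfolding gg_def
  proof (rule mono_by_deriv[where f="\<lambda>t. t^2/2 - ln (cosh t)" and a=u and b=v and f'="\<lambda>t. t - tanh t"])
    fix t :: real assume "u \<le> t" "t \<le> v"
    then show "0 \<le> t - tanh t" using tanh_le_id[of t] that by simp
  qed (use that in \<open>auto intro!: derivative_eq_intros deriv_lncosh simp: tanh_def\<close>)
  have "gg \<bar>x\<bar> \<le> gg \<bar>y\<bar>" using assms by (intro main) auto
  moreover have "gg \<bar>t\<bar> = gg t" for t by (cases "0 \<le> t") (auto simp: gg_even)
  ultimately show ?thesis by simp
qed

lemma lncosh_le_abs: "ln (cosh (y::real)) \<le> \<bar>y\<bar>"
proof -
  have "cosh y \<le> exp \<bar>y\<bar>"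
    unfolding cosh_def by (cases "0 \<le> y") auto
  then have "ln (cosh y) \<le> ln (exp \<bar>y\<bar>)" using ln_le_cancel_iff[of "cosh y" "exp \<bar>y\<bar>"] by simp
  then show ?thesis by simp
qed

lemma gg_lower: "y^2/2 - \<bar>y\<bar> \<le> gg y"
  using lncosh_le_abs[of y] by (simp add: gg_def)



lemma powr_tangent:
  fixes q x y :: real
  assumes q: "0 < q" "q < 1" and x: "0 < x" and y: "0 < y"
  shows "y powr (1-q) \<le> x powr (1-q) + (1-q) * x powr (-q) * (y - x)"
proof -
  have Y: "y powr (1-q) * x powr q \<le> (1-q)*y + q*x"
    using Youngs_inequality_0[of "1-q" q y x] q x y by simp
  have xq: "x powr q * x powr (-q) = 1" using x by (simp add: powr_add[symmetric])
  have x1: "x powr (1-q) = x * x powr (-q)"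
  proof -
    have "x powr (1 + (-q)) = x powr 1 * x powr (-q)" by (rule powr_add)
    then show ?thesis using x by simp
  qed
  have "y powr (1-q) = y powr (1-q) * x powr q * x powr (-q)" using xq by (simp add: mult.assoc)
  also have "\<dots> \<le> ((1-q)*y + q*x) * x powr (-q)"
    by (rule mult_right_mono[OF Y]) simp
  also have "\<dots> = x powr (1-q) + (1-q) * x powr (-q) * (y - x)"
    by (simp add: x1 algebra_simps)
  finally show ?thesis .
qed

lemma psum_upper:
  fixes q :: real
  assumes q: "0 < q" "q < 1"
  shows "(\<Sum>i\<in>{1..n}. real i powr (-q)) \<le> real n powr (1-q) / (1-q)"
proof (induction n)
  case 0 then show ?case by simp
next
  case (Suc n)
  show ?case
  proof (cases "n = 0")
    case True then show ?thesis using q by simp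
  next
    case False
    have t: "real n powr (1-q) \<le> real (Suc n) powr (1-q) + (1-q) * real (Suc n) powr (-q) * (real n - real (Suc n))"
      using False by (intro powr_tangent q) auto
    have "(\<Sum>i\<in>{1..Suc n}. real i powr (-q)) = (\<Sum>i\<in>{1..n}. real i powr (-q)) + real (Suc n) powr (-q)"
      by simp
    also have "\<dots> \<le> real n powr (1-q) / (1-q) + real (Suc n) powr (-q)" using Suc by simp
    also have "\<dots> \<le> real (Suc n) powr (1-q) / (1-q)"
    proof -
      define A where "A = real n powr (1-q)"
      define B where "B = real (Suc n) powr (1-q)"
      define C where "C = real (Suc n) powr (-q)"
      have t': "A \<le> B - (1-q) * C" using t by (simp add: A_def B_def C_def)
      have "A / (1-q) \<le> (B - (1-q) * C) / (1-q)" using q t' by (intro divide_right_mono) auto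
      also have "\<dots> = B/(1-q) - C" using q by (simp add: field_simps)
      finally show ?thesis by (simp add: A_def B_def C_def)
    qed
    finally show ?thesis .
  qed
qed

lemma psum_lower:
  fixes q :: real
  assumes q: "0 < q" "q < 1"
  shows "(real n + 1) powr (1-q) / (1-q) - 1/(1-q) \<le> (\<Sum>i\<in>{1..n}. real i powr (-q))"
proof (induction n)
  case 0 then show ?case by simp
next
  case (Suc n)
  have t: "(real (Suc n) + 1) powr (1-q) \<le> (real n + 1) powr (1-q) + (1-q) * (real n + 1) powr (-q) * ((real (Suc n) + 1) - (real n + 1))"
    by (intro powr_tangent q) auto
  have "(real (Suc n) + 1) powr (1-q) / (1-q) - 1/(1-q) \<le> (real n + 1) powr (1-q) / (1-q) - 1/(1-q) + (real n + 1) powr (-q)"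
  proof -
    define A where "A = (real (Suc n) + 1) powr (1-q)"
    define B where "B = (real n + 1) powr (1-q)"
    define C where "C = (real n + 1) powr (-q)"
    have t': "A \<le> B + (1-q) * C" using t unfolding A_def B_def C_def by simp
    have "A / (1-q) \<le> (B + (1-q) * C) / (1-q)" using q t' by (intro divide_right_mono) auto
    also have "\<dots> = B/(1-q) + C" using q by (simp add: field_simps)
    finally have "A / (1-q) - 1/(1-q) \<le> B/(1-q) - 1/(1-q) + C" by simp
    then show ?thesis unfolding A_def B_def C_def .
  qed
  also have "\<dots> \<le> (\<Sum>i\<in>{1..n}. real i powr (-q)) + real (Suc n) powr (-q)" using Suc by (simp add: add.commute)
  also have "\<dots> = (\<Sum>i\<in>{1..Suc n}. real i powr (-q))" by simp
  finally show ?case .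
qed

lemma psum_crude:
  fixes q :: real
  assumes q: "0 < q" and n: "1 \<le> n"
  shows "real n powr (1-q) \<le> (\<Sum>i\<in>{1..n}. real i powr (-q))"
proof -
  have "(\<Sum>i\<in>{1..n}. real n powr (-q)) \<le> (\<Sum>i\<in>{1..n}. real i powr (-q))"
    by (intro sum_mono powr_mono2') (use q in auto)
  moreover have "(\<Sum>i\<in>{1..n}. real n powr (-q)) = real n powr (1-q)"
    using n by (simp add: powr_diff powr_minus field_simps)
  ultimately show ?thesis by simp
qed

lemma psum_lim:
  fixes q :: real
  assumes q: "0 < q" "q < 1"
  shows "(\<lambda>n. real n powr (q-1) * (\<Sum>i\<in>{1..n}. real i powr (-q))) \<longlonglongrightarrow> 1/(1-q)"
proof (rule tendsto_sandwich[where f="\<lambda>n. real n powr (q-1) * ((real n + 1) powr (1-q) / (1-q) - 1/(1-q))"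
        and h="\<lambda>n. 1/(1-q)"])
  show "\<forall>\<^sub>F n in sequentially. real n powr (q-1) * ((real n + 1) powr (1-q) / (1-q) - 1/(1-q))
          \<le> real n powr (q-1) * (\<Sum>i\<in>{1..n}. real i powr (-q))"
    by (intro always_eventually allI mult_left_mono psum_lower q) simp
  show "\<forall>\<^sub>F n in sequentially. real n powr (q-1) * (\<Sum>i\<in>{1..n}. real i powr (-q)) \<le> 1/(1-q)"
  proof (intro eventually_sequentiallyI[of 1])
    fix n :: nat assume n: "1 \<le> n"
    have "real n powr (q-1) * (\<Sum>i\<in>{1..n}. real i powr (-q)) \<le> real n powr (q-1) * (real n powr (1-q) / (1-q))"
      by (intro mult_left_mono psum_upper q) simp
    also have "\<dots> = 1/(1-q)" using n by (simp add: powr_add[symmetric])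
    finally show "real n powr (q-1) * (\<Sum>i\<in>{1..n}. real i powr (-q)) \<le> 1/(1-q)" .
  qed
  show "(\<lambda>n. real n powr (q-1) * ((real n + 1) powr (1-q) / (1-q) - 1/(1-q))) \<longlonglongrightarrow> 1/(1-q)"
  proof -
    have "(\<lambda>n. real n powr (q-1) * ((real n + 1) powr (1-q) / (1-q) - 1/(1-q))) \<longlonglongrightarrow> inverse (1-q)"
      using q by real_asymp
    then show ?thesis by (simp add: inverse_eq_divide)
  qed
qed simp




lemma sq_powr: "0 < (x::real) \<Longrightarrow> (x powr a)^2 = x powr (2*a)"
  by (simp add: power2_eq_square powr_add[symmetric])

lemma repr:
  fixes tau cw r z :: real and N :: nat
  assumes tau: "3<tau" "tau<5" and cw: "0<cw" and N: "1 \<le> N"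
  defines "p \<equiv> 1/(tau-1)"
  defines "H2 \<equiv> (\<Sum>i\<in>{1..N}. real i powr (-(2*p)))"
  defines "\<kappa> \<equiv> sqrt (real N powr (1 - 2*p) / H2)"
  defines "s \<equiv> r / real N powr (1-p)"
  shows "exp (- real N * GN tau cw N (betacN tau cw N) ((tau - 2) / (tau - 1)) (z / real N powr (1 / (tau - 1))) r)
   = exp (\<Sum>i\<in>{1..N}. ln (cosh (\<kappa> * z * real i powr (-p) + s)) - (\<kappa> * z * real i powr (-p))^2/2)"
    and "\<kappa>^2 * H2 = real N powr (1 - 2*p)"
proof -
  define H1 where "H1 = (\<Sum>i\<in>{1..N}. real i powr (-p))"
  have Npos: "0 < real N" using N by simp
  have H2pos: "0 < H2"
  proof -
    have "real 1 powr (-(2*p)) \<le> H2" unfolding H2_def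
      by (rule member_le_sum) (use N in auto)
    then show ?thesis by simp
  qed
  have H1pos: "0 < H1"
  proof -
    have "real 1 powr (-p) \<le> H1" unfolding H1_def
      by (rule member_le_sum) (use N in auto)
    then show ?thesis by simp
  qed
  have wt: "wt tau cw N i = cw * real N powr p * real i powr (-p)" if "i \<in> {1..N}" for i
    using that by (simp add: wt_def p_def powr_divide powr_minus_divide)
  have wt2: "(wt tau cw N i)^2 = cw^2 * real N powr (2*p) * real i powr (-(2*p))" if "i \<in> {1..N}" for i
    using that Npos by (simp add: wt power_mult_distrib sq_powr)
  have S1: "(\<Sum>i\<in>{1..N}. wt tau cw N i) = cw * real N powr p * H1"
    unfolding H1_def sum_distrib_left by (rule sum.cong) (simp_all add: wt)
  have S2: "(\<Sum>i\<in>{1..N}. (wt tau cw N i)^2) = cw^2 * real N powr (2*p) * H2"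
    unfolding H2_def sum_distrib_left by (rule sum.cong) (simp_all add: wt2)
  define S1v where "S1v = cw * real N powr p * H1"
  define S2v where "S2v = cw^2 * real N powr (2*p) * H2"
  have S1p: "0 < S1v" unfolding S1v_def using cw H1pos Npos by simp
  have S2p: "0 < S2v" unfolding S2v_def using cw H2pos Npos by simp
  have alpha: "alphaN tau cw N (betacN tau cw N) = sqrt (real N / S2v)"
  proof -
    have "alphaN tau cw N (betacN tau cw N) = sqrt ((1 / ((S2v / real N) / (S1v / real N))) / (S1v / real N))"
      unfolding alphaN_def betacN_def nuN_def EWN_def EW2N_def S1 S2 S1v_def S2v_def by simp
    also have "(1 / ((S2v / real N) / (S1v / real N))) / (S1v / real N) = real N / S2v"
      using S1p S2p Npos by (simp add: field_simps)
    finally show ?thesis .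
  qed
  have kap: "sqrt (real N / S2v) * cw = \<kappa>"
  proof -
    have "sqrt (real N / S2v * cw^2) = sqrt (real N / S2v) * sqrt (cw^2)" by (rule real_sqrt_mult)
    then have "sqrt (real N / S2v) * cw = sqrt (real N / S2v * cw^2)" using cw by simp
    also have "real N / S2v * cw^2 = real N powr 1 / real N powr (2*p) / H2"
      unfolding S2v_def using cw Npos by (simp add: field_simps)
    also have "\<dots> = real N powr (1 - 2*p) / H2" by (simp add: powr_diff)
    finally show ?thesis by (simp add: \<kappa>_def)
  qed
  have arg: "alphaN tau cw N (betacN tau cw N) * wt tau cw N i * (z / real N powr (1 / (tau - 1)))
      = \<kappa> * z * real i powr (-p)" if "i \<in> {1..N}" for i
  proof -
    have "alphaN tau cw N (betacN tau cw N) * wt tau cw N i * (z / real N powr (1 / (tau - 1)))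
        = (sqrt (real N / S2v) * cw) * z * real i powr (-p) * (real N powr p / real N powr p)"
      unfolding alpha wt[OF that] p_def by (simp add: field_simps)
    also have "\<dots> = \<kappa> * z * real i powr (-p)" using Npos by (simp add: kap)
    finally show ?thesis .
  qed
  have lam: "(tau - 2) / (tau - 1) = 1 - p" unfolding p_def using tau by (simp add: field_simps)
  show k2: "\<kappa>^2 * H2 = real N powr (1 - 2*p)"
    unfolding \<kappa>_def using H2pos Npos by simp
  have quad: "(\<Sum>i\<in>{1..N}. (\<kappa> * z * real i powr (-p))^2/2) = real N * ((z / real N powr p)^2 / 2)"
  proof -
    have "(\<Sum>i\<in>{1..N}. (\<kappa> * z * real i powr (-p))^2/2) = \<kappa>^2 * H2 * z^2 / 2"
      unfolding H2_def by (simp add: power_mult_distrib sq_powr sum_distrib_left sum_divide_distrib mult_ac)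
    also have "\<dots> = real N powr (1 - 2*p) * z^2/2" by (simp add: k2)
    also have "\<dots> = real N * ((z / real N powr p)^2 / 2)"
      using Npos by (simp add: powr_diff power_divide sq_powr field_simps)
    finally show ?thesis .
  qed
  show "exp (- real N * GN tau cw N (betacN tau cw N) ((tau - 2) / (tau - 1)) (z / real N powr (1 / (tau - 1))) r)
   = exp (\<Sum>i\<in>{1..N}. ln (cosh (\<kappa> * z * real i powr (-p) + s)) - (\<kappa> * z * real i powr (-p))^2/2)"
  proof -
    have "- real N * GN tau cw N (betacN tau cw N) ((tau - 2) / (tau - 1)) (z / real N powr (1 / (tau - 1))) r
       = (\<Sum>i\<in>{1..N}. ln (cosh (\<kappa> * z * real i powr (-p) + s))) - real N * ((z / real N powr p)^2 / 2)"
    proof -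
      have sumeq: "(\<Sum>i\<in>{1..N}. ln (cosh (alphaN tau cw N (betacN tau cw N) * wt tau cw N i * (z / real N powr p) + r / real N powr (1-p))))
          = (\<Sum>i\<in>{1..N}. ln (cosh (\<kappa> * z * real i powr (-p) + s)))"
        by (rule sum.cong) (simp_all only: arg[unfolded p_def[symmetric]] s_def)
      have "GN tau cw N (betacN tau cw N) ((tau - 2) / (tau - 1)) (z / real N powr (1 / (tau - 1))) r
         = (z / real N powr p)^2 / 2 - (\<Sum>i\<in>{1..N}. ln (cosh (\<kappa> * z * real i powr (-p) + s))) / real N"
        unfolding GN_def lam p_def[symmetric] sumeq by simp
      then show ?thesis using Npos by (simp add: field_simps)
    qed
    also have "\<dots> = (\<Sum>i\<in>{1..N}. ln (cosh (\<kappa> * z * real i powr (-p) + s)) - (\<kappa> * z * real i powr (-p))^2/2)"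
      by (simp only: sum_subtractf quad)
    finally show ?thesis by simp
  qed
qed

lemma pow4_powr: "0 < (x::real) \<Longrightarrow> (x powr a)^4 = x powr (4*a)"
proof -
  assume x: "0 < x"
  have "(x powr a)^4 = ((x powr a)^2)^2" by simp
  also have "\<dots> = x powr (4*a)" using x by (simp add: sq_powr)
  finally show ?thesis .
qed

lemma isCont_gg: "isCont gg x"
  unfolding gg_def by (intro continuous_intros) auto

definition "p tau = 1/(tau-1)"
definition "H1 tau N = (\<Sum>i\<in>{1..N}. real i powr (- p tau))"
definition "H2 tau N = (\<Sum>i\<in>{1..N}. real i powr (-(2 * p tau)))"
definition "kap tau N = sqrt (real N powr (1 - 2 * p tau) / H2 tau N)"
definition "sN tau r N = r / real N powr (1 - p tau)"
definition "kinf tau = sqrt (1 - 2 * p tau)"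
definition "aa tau N z i = kap tau N * z * real i powr (- p tau)"
definition "EE tau r N z = (\<Sum>i\<in>{1..N}. ln (cosh (aa tau N z i + sN tau r N)) - (aa tau N z i)^2/2)"
definition "LimF tau r z = r * z * kinf tau / (1-p tau) - (\<Sum>k. gg (kinf tau * z * real (Suc k) powr (- p tau)))"
definition "phi tau r N z i = ln (cosh (aa tau N z i + sN tau r N)) - ln (cosh (aa tau N z i)) - sN tau r N * tanh (aa tau N z i)"

context
  fixes tau cw r :: real
  assumes tau3: "3 < tau" and tau5: "tau < 5" and cwpos: "0 < cw"
begin

lemma p_bounds: "1/4 < p tau" "p tau < 1/2"
  unfolding p_def using tau3 tau5 by (simp_all add: field_simps)

lemma H2_pos: "1 \<le> N \<Longrightarrow> 0 < H2 tau N"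
proof -
  assume N: "1 \<le> N"
  have "real 1 powr (-(2*p tau)) \<le> H2 tau N" unfolding H2_def
    by (rule member_le_sum) (use N in auto)
  then show ?thesis by simp
qed

lemma kap2: "1 \<le> N \<Longrightarrow> (kap tau N)^2 * H2 tau N = real N powr (1 - 2*p tau)"
  unfolding kap_def using H2_pos[of N] by simp

lemma kap_bounds: assumes N: "1 \<le> N" shows "kinf tau \<le> kap tau N" "kap tau N \<le> 1"
proof -
  have q: "0 < 2*p tau" "2*p tau < 1" using p_bounds by auto
  have up: "H2 tau N \<le> real N powr (1 - 2*p tau) / (1 - 2*p tau)"
    unfolding H2_def using psum_upper[OF q, of N] by simp
  have lo: "real N powr (1 - 2*p tau) \<le> H2 tau N"
    unfolding H2_def using psum_crude[of "2*p tau" N] q N by simp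
  have Np: "0 < real N powr (1 - 2*p tau)" using N by simp
  have H: "0 < H2 tau N" using H2_pos[OF N] .
  have "1 - 2*p tau \<le> real N powr (1 - 2*p tau) / H2 tau N"
    using up H Np q by (simp add: field_simps)
  then show "kinf tau \<le> kap tau N" unfolding kinf_def kap_def by (rule real_sqrt_le_mono)
  have "real N powr (1 - 2*p tau) / H2 tau N \<le> 1" using lo H by simp
  then show "kap tau N \<le> 1" unfolding kap_def by simp
qed

lemma kinf_pos: "0 < kinf tau"
  unfolding kinf_def using p_bounds by simp

lemma kap_lim: "kap tau \<longlonglongrightarrow> kinf tau"
proof -
  have q: "0 < 2*p tau" "2*p tau < 1" using p_bounds by auto
  have l: "(\<lambda>n. real n powr (2*p tau-1) * H2 tau n) \<longlonglongrightarrow> 1/(1-2*p tau)"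
    unfolding H2_def using psum_lim[OF q] by simp
  have "(\<lambda>n. inverse (real n powr (2*p tau-1) * H2 tau n)) \<longlonglongrightarrow> inverse (1/(1-2*p tau))"
    by (rule tendsto_inverse[OF l]) (use q in simp)
  then have l2: "(\<lambda>n. inverse (real n powr (2*p tau-1) * H2 tau n)) \<longlonglongrightarrow> 1 - 2*p tau" by simp
  have ev: "\<forall>\<^sub>F n in sequentially. inverse (real n powr (2*p tau-1) * H2 tau n) = real n powr (1 - 2*p tau) / H2 tau n"
  proof (intro eventually_sequentiallyI[of 1])
    fix n :: nat assume n: "1 \<le> n"
    have "real n powr (2*p tau-1) = inverse (real n powr (1 - 2*p tau))"
      using n by (simp add: powr_minus[symmetric])
    then show "inverse (real n powr (2*p tau-1) * H2 tau n) = real n powr (1 - 2*p tau) / H2 tau n"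
      by (simp add: field_simps)
  qed
  have "(\<lambda>n. real n powr (1 - 2*p tau) / H2 tau n) \<longlonglongrightarrow> 1 - 2*p tau"
    using tendsto_cong[OF ev] l2 by simp
  then have "(\<lambda>n. sqrt (real n powr (1 - 2*p tau) / H2 tau n)) \<longlonglongrightarrow> sqrt (1 - 2*p tau)"
    by (rule tendsto_real_sqrt)
  then show ?thesis unfolding kap_def[abs_def] kinf_def .
qed

end

context
  fixes tau cw r :: real
  assumes tau3: "3 < tau" and tau5: "tau < 5" and cwpos: "0 < cw"
begin

lemma pb: "1/4 < p tau" "p tau < 1/2" using p_bounds tau3 tau5 cwpos by blast+



lemma decomp: "EE tau r N z = - (\<Sum>i\<in>{1..N}. gg (aa tau N z i)) + (\<Sum>i\<in>{1..N}. phi tau r N z i)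
     + sN tau r N * (\<Sum>i\<in>{1..N}. tanh (aa tau N z i))"
  unfolding EE_def phi_def gg_def sum_distrib_left sum_negf[symmetric] sum.distrib[symmetric]
  by (rule sum.cong) auto

lemma phi_sum_bounds: "0 \<le> (\<Sum>i\<in>{1..N}. phi tau r N z i)" "(\<Sum>i\<in>{1..N}. phi tau r N z i) \<le> real N * (sN tau r N)^2 / 2"
proof -
  show "0 \<le> (\<Sum>i\<in>{1..N}. phi tau r N z i)"
    unfolding phi_def by (intro sum_nonneg) (use lncosh_taylor(1) in auto)
  have "(\<Sum>i\<in>{1..N}. phi tau r N z i) \<le> (\<Sum>i\<in>{1..N}. (sN tau r N)^2/2)"
    unfolding phi_def by (intro sum_mono) (use lncosh_taylor(2) in auto)
  then show "(\<Sum>i\<in>{1..N}. phi tau r N z i) \<le> real N * (sN tau r N)^2 / 2" by simp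
qed

lemma Ns2: "1 \<le> N \<Longrightarrow> real N * (sN tau r N)^2 = r^2 * real N powr (2 * p tau - 1)"
proof -
  assume N: "1 \<le> N"
  have Np: "0 < real N" using N by simp
  have "real N * (sN tau r N)^2 = r^2 * (real N powr 1 / (real N powr (1 - p tau))^2)"
    unfolding sN_def using Np by (simp add: power_divide)
  also have "(real N powr (1 - p tau))^2 = real N powr (2 - 2 * p tau)"
    using Np by (simp add: sq_powr algebra_simps)
  also have "real N powr 1 / real N powr (2 - 2 * p tau) = real N powr (1 - (2 - 2 * p tau))"
    by (rule powr_diff[symmetric])
  also have "1 - (2 - 2 * p tau) = 2 * p tau - 1" by simp
  finally show ?thesis .
qed

lemma tanh_diff_bound: assumes N: "1 \<le> N"
  shows "\<bar>sN tau r N * (\<Sum>i\<in>{1..N}. tanh (aa tau N z i)) - sN tau r N * (\<Sum>i\<in>{1..N}. aa tau N z i)\<bar>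
         \<le> \<bar>r\<bar> * z^2 * real N powr (- p tau)"
proof -
  have Np: "0 < real N" using N by simp
  have "\<bar>(\<Sum>i\<in>{1..N}. tanh (aa tau N z i)) - (\<Sum>i\<in>{1..N}. aa tau N z i)\<bar>
      \<le> (\<Sum>i\<in>{1..N}. \<bar>tanh (aa tau N z i) - aa tau N z i\<bar>)"
    unfolding sum_subtractf[symmetric] by (rule sum_abs)
  also have "\<dots> \<le> (\<Sum>i\<in>{1..N}. (aa tau N z i)^2)"
    by (intro sum_mono) (metis abs_minus_commute id_minus_tanh)
  also have "(\<Sum>i\<in>{1..N}. (aa tau N z i)^2) = (kap tau N)^2 * H2 tau N * z^2"
    unfolding aa_def H2_def by (simp add: power_mult_distrib sq_powr sum_distrib_left mult_ac)
  also have "\<dots> = real N powr (1 - 2 * p tau) * z^2"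
    using kap2[OF tau3 tau5 cwpos N] by simp
  finally have A: "\<bar>(\<Sum>i\<in>{1..N}. tanh (aa tau N z i)) - (\<Sum>i\<in>{1..N}. aa tau N z i)\<bar>
      \<le> real N powr (1 - 2 * p tau) * z^2" .
  have "\<bar>sN tau r N * (\<Sum>i\<in>{1..N}. tanh (aa tau N z i)) - sN tau r N * (\<Sum>i\<in>{1..N}. aa tau N z i)\<bar>
     = \<bar>sN tau r N\<bar> * \<bar>(\<Sum>i\<in>{1..N}. tanh (aa tau N z i)) - (\<Sum>i\<in>{1..N}. aa tau N z i)\<bar>"
    by (simp add: abs_mult[symmetric] right_diff_distrib)
  also have "\<dots> \<le> \<bar>sN tau r N\<bar> * (real N powr (1 - 2 * p tau) * z^2)"
    by (intro mult_left_mono A) simp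
  also have "\<bar>sN tau r N\<bar> = \<bar>r\<bar> / real N powr (1 - p tau)"
    unfolding sN_def by simp
  also have "\<bar>r\<bar> / real N powr (1 - p tau) * (real N powr (1 - 2 * p tau) * z^2)
      = \<bar>r\<bar> * z^2 * (real N powr (1 - 2 * p tau) / real N powr (1 - p tau))" by simp
  also have "real N powr (1 - 2 * p tau) / real N powr (1 - p tau) = real N powr (- p tau)"
    by (simp add: powr_diff[symmetric])
  finally show ?thesis .
qed

lemma sum_a: "1 \<le> N \<Longrightarrow> sN tau r N * (\<Sum>i\<in>{1..N}. aa tau N z i)
   = r * z * kap tau N * (real N powr (p tau - 1) * H1 tau N)"
proof -
  assume N: "1 \<le> N"
  have "sN tau r N = r * real N powr (p tau - 1)"
    unfolding sN_def using N by (simp add: powr_minus_divide[symmetric] divide_inverse powr_minus[symmetric])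
  then show ?thesis unfolding aa_def H1_def by (simp add: sum_distrib_left mult_ac)
qed


end

context
  fixes tau cw r :: real
  assumes tau3: "3 < tau" and tau5: "tau < 5" and cwpos: "0 < cw"
begin
lemma pbb: "1/4 < p tau" "p tau < 1/2" using p_bounds tau3 tau5 cwpos by blast+
lemma T4: "(\<lambda>N. \<Sum>i\<in>{1..N}. gg (aa tau N z i)) \<longlonglongrightarrow> (\<Sum>k. gg (kinf tau * z * real (Suc k) powr (- p tau)))"
proof -
  define A where "A k N = (if k < N then gg (kap tau N * z * real (Suc k) powr (- p tau)) else 0)" for k N
  define M where "M k = z^4 / 12 * real (Suc k) powr (-(4 * p tau))" for k
  have lim: "(\<lambda>N. A k N) \<longlonglongrightarrow> gg (kinf tau * z * real (Suc k) powr (- p tau))" for k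
  proof -
    have "(\<lambda>N. gg (kap tau N * z * real (Suc k) powr (- p tau))) \<longlonglongrightarrow> gg (kinf tau * z * real (Suc k) powr (- p tau))"
      by (intro isCont_tendsto_compose[OF isCont_gg] tendsto_intros kap_lim[OF tau3 tau5 cwpos])
    moreover have "\<forall>\<^sub>F N in sequentially. gg (kap tau N * z * real (Suc k) powr (- p tau)) = A k N"
      by (intro eventually_sequentiallyI[of "Suc k"]) (simp add: A_def)
    ultimately show ?thesis by (rule Lim_transform_eventually)
  qed
  have bound: "norm (A k N) \<le> M k" for k N
  proof (cases "k < N")
    case True
    then have N: "1 \<le> N" by simp
    have c: "0 < real (Suc k) powr (- p tau)" by simp
    have k0: "0 \<le> kap tau N" unfolding kap_def using H2_pos[OF tau3 tau5 cwpos N] by simp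
    have k1: "kap tau N \<le> 1" using kap_bounds[OF tau3 tau5 cwpos N] by simp
    have "\<bar>kap tau N * z * real (Suc k) powr (- p tau)\<bar> = kap tau N * \<bar>z * real (Suc k) powr (- p tau)\<bar>"
      using k0 by (simp add: abs_mult)
    also have "\<dots> \<le> \<bar>z * real (Suc k) powr (- p tau)\<bar>"
      by (rule mult_left_le_one_le[OF _ k0 k1]) simp
    finally have "\<bar>kap tau N * z * real (Suc k) powr (- p tau)\<bar> \<le> \<bar>z * real (Suc k) powr (- p tau)\<bar>" .
    then have "gg (kap tau N * z * real (Suc k) powr (- p tau)) \<le> gg (z * real (Suc k) powr (- p tau))"
      by (rule gg_mono)
    also have "\<dots> \<le> (z * real (Suc k) powr (- p tau))^4 / 12" by (rule gg_le4)
    also have "\<dots> = M k" unfolding M_def by (simp add: power_mult_distrib pow4_powr)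
    finally show ?thesis using True gg_nonneg by (simp add: A_def)
  next
    case False
    then show ?thesis unfolding A_def M_def by simp
  qed
  have summ: "summable M"
  proof -
    have "summable (\<lambda>n. real n powr (-(4 * p tau)))"
      unfolding summable_real_powr_iff using pbb by simp
    then have "summable (\<lambda>k. real (Suc k) powr (-(4 * p tau)))"
      by (subst summable_Suc_iff)
    then show ?thesis unfolding M_def by (rule summable_mult)
  qed
  have T: "(\<lambda>N. suminf (\<lambda>k. A k N)) \<longlonglongrightarrow> (\<Sum>k. gg (kinf tau * z * real (Suc k) powr (- p tau)))"
  proof -
    have ev: "eventually (\<lambda>(k,n). norm (A k n) \<le> M k) (at_top \<times>\<^sub>F sequentially)"
      by (intro always_eventually) (use bound in \<open>simp split: prod.split\<close>)
    show ?thesis using tannerys_theorem[OF lim ev summ sequentially_bot] by blast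
  qed
  have eq: "suminf (\<lambda>k. A k N) = (\<Sum>i\<in>{1..N}. gg (aa tau N z i))" for N
  proof -
    have "suminf (\<lambda>k. A k N) = (\<Sum>k\<in>{..<N}. A k N)"
      by (rule suminf_finite) (auto simp: A_def)
    also have "\<dots> = (\<Sum>k<N. gg (kap tau N * z * real (Suc k) powr (- p tau)))"
      by (rule sum.cong) (auto simp: A_def)
    also have "\<dots> = (\<Sum>i\<in>{1..N}. gg (aa tau N z i))"
      unfolding aa_def by (simp add: sum.atLeast1_atMost_eq)
    finally show ?thesis .
  qed
  show ?thesis using T unfolding eq .
qed

end

context
  fixes tau cw r :: real
  assumes tau3: "3 < tau" and tau5: "tau < 5" and cwpos: "0 < cw"
begin

lemma pb6: "1/4 < p tau" "p tau < 1/2" using p_bounds tau3 tau5 cwpos by blast+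

lemma npow_lim0: "e < 0 \<Longrightarrow> (\<lambda>N. real N powr e) \<longlonglongrightarrow> 0"
  by (rule tendsto_neg_powr[OF _ filterlim_real_sequentially])

lemma pointwise: "(\<lambda>N. EE tau r N z) \<longlonglongrightarrow> LimF tau r z"
proof -
  define S4 where "S4 N = (\<Sum>i\<in>{1..N}. gg (aa tau N z i))" for N
  define SP where "SP N = (\<Sum>i\<in>{1..N}. phi tau r N z i)" for N
  define D where "D N = sN tau r N * (\<Sum>i\<in>{1..N}. tanh (aa tau N z i)) - sN tau r N * (\<Sum>i\<in>{1..N}. aa tau N z i)" for N
  define SA where "SA N = sN tau r N * (\<Sum>i\<in>{1..N}. aa tau N z i)" for N
  have eq: "EE tau r N z = - S4 N + SP N + D N + SA N" for N
    unfolding S4_def SP_def D_def SA_def decomp[OF tau3 tau5 cwpos] by simp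
  have l4: "S4 \<longlonglongrightarrow> (\<Sum>k. gg (kinf tau * z * real (Suc k) powr (- p tau)))"
    unfolding S4_def[abs_def] by (rule T4[OF tau3 tau5 cwpos])
  have lP: "SP \<longlonglongrightarrow> 0"
  proof (rule Lim_null_comparison)
    show "\<forall>\<^sub>F N in sequentially. norm (SP N) \<le> r^2 / 2 * real N powr (2 * p tau - 1)"
    proof (intro eventually_sequentiallyI[of 1])
      fix N :: nat assume N: "1 \<le> N"
      have "norm (SP N) = SP N" unfolding SP_def using phi_sum_bounds(1)[OF tau3 tau5 cwpos] by simp
      also have "\<dots> \<le> real N * (sN tau r N)^2 / 2" unfolding SP_def by (rule phi_sum_bounds(2)[OF tau3 tau5 cwpos])
      also have "\<dots> = r^2 / 2 * real N powr (2 * p tau - 1)" using Ns2[OF tau3 tau5 cwpos N] by simp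
      finally show "norm (SP N) \<le> r^2 / 2 * real N powr (2 * p tau - 1)" .
    qed
    show "(\<lambda>N. r^2 / 2 * real N powr (2 * p tau - 1)) \<longlonglongrightarrow> 0"
      using npow_lim0[of "2 * p tau - 1"] pb6 by (auto intro: tendsto_mult_right_zero)
  qed
  have lD: "D \<longlonglongrightarrow> 0"
  proof (rule Lim_null_comparison)
    show "\<forall>\<^sub>F N in sequentially. norm (D N) \<le> \<bar>r\<bar> * z^2 * real N powr (- p tau)"
    proof (intro eventually_sequentiallyI[of 1])
      fix N :: nat assume N: "1 \<le> N"
      show "norm (D N) \<le> \<bar>r\<bar> * z^2 * real N powr (- p tau)"
        unfolding D_def real_norm_def by (rule tanh_diff_bound[OF tau3 tau5 cwpos N])
    qed
    show "(\<lambda>N. \<bar>r\<bar> * z^2 * real N powr (- p tau)) \<longlonglongrightarrow> 0"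
      using npow_lim0[of "- p tau"] pb6 by (auto intro: tendsto_mult_left_zero tendsto_mult_right_zero)
  qed
  have lA: "SA \<longlonglongrightarrow> r * z * kinf tau * (1 / (1 - p tau))"
  proof -
    have q: "0 < p tau" "p tau < 1" using pb6 by auto
    have h1: "(\<lambda>N. real N powr (p tau - 1) * H1 tau N) \<longlonglongrightarrow> 1 / (1 - p tau)"
      unfolding H1_def using psum_lim[OF q] by simp
    have "(\<lambda>N. r * z * kap tau N * (real N powr (p tau - 1) * H1 tau N)) \<longlonglongrightarrow> r * z * kinf tau * (1 / (1 - p tau))"
      by (intro tendsto_intros h1 kap_lim[OF tau3 tau5 cwpos])
    moreover have "\<forall>\<^sub>F N in sequentially. r * z * kap tau N * (real N powr (p tau - 1) * H1 tau N) = SA N"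
    proof (intro eventually_sequentiallyI[of 1])
      fix N :: nat assume N: "1 \<le> N"
      show "r * z * kap tau N * (real N powr (p tau - 1) * H1 tau N) = SA N"
        unfolding SA_def by (rule sum_a[OF tau3 tau5 cwpos N, symmetric])
    qed
    ultimately show ?thesis by (rule Lim_transform_eventually)
  qed
  have "(\<lambda>N. - S4 N + SP N + D N + SA N) \<longlonglongrightarrow>
      - (\<Sum>k. gg (kinf tau * z * real (Suc k) powr (- p tau))) + 0 + 0 + r * z * kinf tau * (1 / (1 - p tau))"
    by (intro tendsto_intros l4 lP lD lA)
  moreover have "- (\<Sum>k. gg (kinf tau * z * real (Suc k) powr (- p tau))) + 0 + 0 + r * z * kinf tau * (1 / (1 - p tau))
      = LimF tau r z" unfolding LimF_def by simp
  ultimately show ?thesis unfolding eq by simp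
qed

lemma dominate: assumes N: "1 \<le> N"
  shows "EE tau r N z \<le> - gg (kinf tau * z) + r^2/2 + \<bar>r\<bar> * \<bar>z\<bar> / (1 - p tau)"
proof -
  have q: "0 < p tau" "p tau < 1" using pb6 by auto
  have Np: "0 < real N" using N by simp
  have k0: "0 \<le> kap tau N" unfolding kap_def using H2_pos[OF tau3 tau5 cwpos N] by simp
  have kb: "kinf tau \<le> kap tau N" "kap tau N \<le> 1" using kap_bounds[OF tau3 tau5 cwpos N] by auto
  have ki: "0 < kinf tau" by (rule kinf_pos[OF tau3 tau5 cwpos])
  have "gg (aa tau N z 1) \<le> (\<Sum>i\<in>{1..N}. gg (aa tau N z i))"
    by (rule member_le_sum) (use N gg_nonneg in auto)
  moreover have "gg (kinf tau * z) \<le> gg (aa tau N z 1)"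
  proof (rule gg_mono)
    have "\<bar>kinf tau * z\<bar> = kinf tau * \<bar>z\<bar>" using ki by (simp add: abs_mult)
    also have "\<dots> \<le> kap tau N * \<bar>z\<bar>" using kb by (intro mult_right_mono) auto
    also have "\<dots> = \<bar>aa tau N z 1\<bar>" unfolding aa_def using k0 by (simp add: abs_mult)
    finally show "\<bar>kinf tau * z\<bar> \<le> \<bar>aa tau N z 1\<bar>" .
  qed
  ultimately have G: "- (\<Sum>i\<in>{1..N}. gg (aa tau N z i)) \<le> - gg (kinf tau * z)" by simp
  have P: "(\<Sum>i\<in>{1..N}. phi tau r N z i) \<le> r^2/2"
  proof -
    have "(\<Sum>i\<in>{1..N}. phi tau r N z i) \<le> real N * (sN tau r N)^2 / 2" by (rule phi_sum_bounds(2)[OF tau3 tau5 cwpos])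
    also have "\<dots> = r^2 * real N powr (2 * p tau - 1) / 2" using Ns2[OF tau3 tau5 cwpos N] by simp
    also have "\<dots> \<le> r^2 * 1 / 2"
    proof -
      have "real N powr (2 * p tau - 1) \<le> real N powr 0" using N pb6 by (intro powr_mono) auto
      then have "real N powr (2 * p tau - 1) \<le> 1" using Np by simp
      then show ?thesis by (intro divide_right_mono mult_left_mono) auto
    qed
    finally show ?thesis by simp
  qed
  have T: "sN tau r N * (\<Sum>i\<in>{1..N}. tanh (aa tau N z i)) \<le> \<bar>r\<bar> * \<bar>z\<bar> / (1 - p tau)"
  proof -
    have "sN tau r N * (\<Sum>i\<in>{1..N}. tanh (aa tau N z i)) \<le> \<bar>sN tau r N\<bar> * \<bar>\<Sum>i\<in>{1..N}. tanh (aa tau N z i)\<bar>"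
      by (metis abs_ge_self abs_mult)
    also have "\<dots> \<le> \<bar>sN tau r N\<bar> * (\<Sum>i\<in>{1..N}. \<bar>aa tau N z i\<bar>)"
    proof (intro mult_left_mono)
      have "\<bar>\<Sum>i\<in>{1..N}. tanh (aa tau N z i)\<bar> \<le> (\<Sum>i\<in>{1..N}. \<bar>tanh (aa tau N z i)\<bar>)" by (rule sum_abs)
      also have "\<dots> \<le> (\<Sum>i\<in>{1..N}. \<bar>aa tau N z i\<bar>)" by (intro sum_mono abs_tanh_le)
      finally show "\<bar>\<Sum>i\<in>{1..N}. tanh (aa tau N z i)\<bar> \<le> (\<Sum>i\<in>{1..N}. \<bar>aa tau N z i\<bar>)" .
    qed simp
    also have "(\<Sum>i\<in>{1..N}. \<bar>aa tau N z i\<bar>) = kap tau N * \<bar>z\<bar> * H1 tau N"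
      unfolding aa_def H1_def using k0 by (simp add: abs_mult sum_distrib_left)
    also have "\<bar>sN tau r N\<bar> * (kap tau N * \<bar>z\<bar> * H1 tau N) \<le> (\<bar>r\<bar> / real N powr (1 - p tau)) * (1 * \<bar>z\<bar> * (real N powr (1 - p tau) / (1 - p tau)))"
    proof (rule mult_mono)
      show "\<bar>sN tau r N\<bar> \<le> \<bar>r\<bar> / real N powr (1 - p tau)" unfolding sN_def by simp
      show "kap tau N * \<bar>z\<bar> * H1 tau N \<le> 1 * \<bar>z\<bar> * (real N powr (1 - p tau) / (1 - p tau))"
      proof (rule mult_mono)
        show "H1 tau N \<le> real N powr (1 - p tau) / (1 - p tau)"
          unfolding H1_def by (rule psum_upper[OF q])
        show "0 \<le> H1 tau N" unfolding H1_def by (intro sum_nonneg) simp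
      qed (use kb k0 in \<open>auto intro: mult_left_le_one_le\<close>)
    qed (use k0 in \<open>auto intro!: mult_nonneg_nonneg divide_nonneg_nonneg sum_nonneg simp: H1_def\<close>)
    also have "(\<bar>r\<bar> / real N powr (1 - p tau)) * (1 * \<bar>z\<bar> * (real N powr (1 - p tau) / (1 - p tau))) = \<bar>r\<bar> * \<bar>z\<bar> / (1 - p tau)"
      using Np by simp
    finally show ?thesis .
  qed
  show ?thesis
    using G P T phi_sum_bounds(1)[OF tau3 tau5 cwpos] unfolding decomp[OF tau3 tau5 cwpos] by linarith
qed

end

lemma c_eq:
  fixes tau cw :: real
  assumes tau3: "3 < tau" and tau5: "tau < 5" and cwpos: "0 < cw"
  shows "sqrt (EW tau cw / nu tau cw) = kinf tau / (1 - p tau)"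
proof -
  have pb: "1/4 < p tau" "p tau < 1/2" using p_bounds[OF tau3 tau5 cwpos] by auto
  have "EW tau cw / nu tau cw = (1 - 2 * p tau) / (1 - p tau)^2"
  proof -
    have a: "tau - 1 \<noteq> 0" "tau - 2 \<noteq> 0" "tau - 3 \<noteq> 0" "cw \<noteq> 0" using tau3 cwpos by auto
    have e1: "EW tau cw / nu tau cw = (tau-1)*(tau-3)/(tau-2)^2"
    proof -
      have g: "(cw*A/B) / ((cw^2*A/C)/(cw*A/B)) = A*C/B^2" if "A \<noteq> 0" "B \<noteq> 0" "C \<noteq> 0" "cw \<noteq> 0" for A B C cw :: real
        using that by (simp add: field_simps power2_eq_square)
      show ?thesis unfolding EW_def EW2_def nu_def by (rule g) (use a in auto)
    qed
    have e2: "(1 - 2 * p tau) / (1 - p tau)^2 = (tau-1)*(tau-3)/(tau-2)^2"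
    proof -
      have g: "(1 - 2 * (1/A)) / (1 - 1/A)^2 = A*(A-2)/(A-1)^2" if "A \<noteq> 0" "A - 1 \<noteq> 0" for A :: real
      proof -
        have e1: "1 - 1/A = (A-1)/A" "1 - 2*(1/A) = (A-2)/A" using that by (simp_all add: field_simps)
        have "((A-2)/A) / ((A-1)/A)^2 = ((A-2)/A) * (A^2 / (A-1)^2)" by (simp add: power_divide)
        also have "\<dots> = A*(A-2)/(A-1)^2" using that by (simp add: power2_eq_square)
        finally show ?thesis unfolding e1 .
      qed
      have "(1 - 2 * (1/(tau-1))) / (1 - 1/(tau-1))^2 = (tau-1)*((tau-1)-2)/((tau-1)-1)^2"
        by (rule g) (use a in auto)
      then show ?thesis unfolding p_def by (simp add: algebra_simps)
    qed
    show ?thesis using e1 e2 by simp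
  qed
  then have "sqrt (EW tau cw / nu tau cw) = sqrt (1 - 2 * p tau) / sqrt ((1 - p tau)^2)"
    by (simp add: real_sqrt_divide)
  also have "sqrt ((1 - p tau)^2) = 1 - p tau" using pb by simp
  finally show ?thesis unfolding kinf_def .
qed

lemma target_eq:
  fixes tau cw r z :: real
  assumes tau3: "3 < tau" and tau5: "tau < 5" and cwpos: "0 < cw"
  shows "z * r * sqrt (EW tau cw / nu tau cw) - flim tau (sqrt (EW tau cw / nu tau cw) * z) = LimF tau r z"
proof -
  have pb: "1/4 < p tau" "p tau < 1/2" using p_bounds[OF tau3 tau5 cwpos] by auto
  have c: "sqrt (EW tau cw / nu tau cw) = kinf tau / (1 - p tau)" by (rule c_eq[OF tau3 tau5 cwpos])
  have l: "(tau - 2) / (tau - 1) = 1 - p tau" unfolding p_def using tau3 by (simp add: field_simps)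
  have m: "- 1 / (tau - 1) = - p tau" unfolding p_def by simp
  have y: "(tau - 2) / (tau - 1) * (sqrt (EW tau cw / nu tau cw) * z) * real (Suc k) powr (- 1 / (tau - 1))
      = kinf tau * z * real (Suc k) powr (- p tau)" for k
    unfolding l m c using pb by simp
  have "flim tau (sqrt (EW tau cw / nu tau cw) * z) = (\<Sum>k. gg (kinf tau * z * real (Suc k) powr (- p tau)))"
    unfolding flim_def Let_def y gg_def ..
  then show ?thesis unfolding LimF_def c using pb by (simp add: field_simps)
qed

lemma integrand_eq:
  fixes tau cw r z :: real and N :: nat
  assumes tau3: "3 < tau" and tau5: "tau < 5" and cwpos: "0 < cw" and N: "1 \<le> N"
  shows "exp (- real N * GN tau cw N (betacN tau cw N) ((tau - 2) / (tau - 1)) (z / real N powr (1 / (tau - 1))) r)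
      = exp (EE tau r N z)"
  unfolding repr(1)[OF tau3 tau5 cwpos N] EE_def aa_def kap_def H2_def sN_def p_def ..


lemma gauss_integrable:
  fixes k :: real assumes k: "0 < k"
  shows "integrable lborel (\<lambda>z. exp (-(k^2/4) * z^2))"
proof -
  have i: "integrable lborel (\<lambda>z. std_normal_density (0 + (k / sqrt 2) * z))"
  proof -
    have kne: "k / sqrt 2 \<noteq> 0" using k by simp
    show ?thesis using lborel_integrable_real_affine[OF integrable_normal_density kne, where \<sigma>1=1 and \<mu>1=0 and t=0] by simp
  qed
  have e: "exp (-(k^2/4) * z^2) = sqrt (2 * pi) * std_normal_density (0 + (k / sqrt 2) * z)" for z
  proof -
    have "(k / sqrt 2 * z)^2 / 2 = k^2/4 * z^2" by (simp add: power_mult_distrib power_divide)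
    then show ?thesis by (simp add: std_normal_density_def)
  qed
  show ?thesis unfolding e by (intro integrable_mult_right i)
qed

lemma quad_bound:
  fixes k D z :: real assumes k: "0 < k"
  shows "-(k^2/2) * z^2 + D * \<bar>z\<bar> \<le> -(k^2/4) * z^2 + D^2/k^2"
proof -
  have sq: "0 \<le> (k*\<bar>z\<bar>/2 - D/k)^2" by simp
  have ex: "(k*\<bar>z\<bar>/2 - D/k)^2 = k^2*z^2/4 - D*\<bar>z\<bar> + D^2/k^2"
    using k by (simp add: power2_eq_square field_simps)
  show ?thesis using sq ex by simp
qed

theorem mainTheorem13:
  fixes tau cw r :: real
  assumes "3 < tau" "tau < 5" "0 < cw"
  shows "(\<lambda>N. integral\<^sup>L lborel
            (\<lambda>z. exp (- real N * GN tau cw N (betacN tau cw N) ((tau - 2) / (tau - 1))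
                                     (z / real N powr (1 / (tau - 1))) r)))
         \<longlonglongrightarrow> integral\<^sup>L lborel
            (\<lambda>z. exp (z * r * sqrt (EW tau cw / nu tau cw)
                      - flim tau (sqrt (EW tau cw / nu tau cw) * z)))"
proof -
  note A = assms
  have pb: "1/4 < p tau" "p tau < 1/2" using p_bounds[OF A] by auto
  define k where "k = kinf tau"
  have kpos: "0 < k" unfolding k_def by (rule kinf_pos[OF A])
  define D where "D = k + \<bar>r\<bar> / (1 - p tau)"
  define C where "C = exp (r^2/2 + D^2/k^2)"
  define w where "w z = C * exp (-(k^2/4) * z^2)" for z
  define s where "s n z = exp (EE tau r (Suc n) z)" for n z
  define f where "f z = exp (LimF tau r z)" for z
  have lim: "(\<lambda>n. s n z) \<longlonglongrightarrow> f z" for z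
  proof -
    have "(\<lambda>N. exp (EE tau r N z)) \<longlonglongrightarrow> exp (LimF tau r z)"
      by (intro tendsto_intros pointwise[OF A])
    then show ?thesis unfolding s_def f_def by (rule filterlim_sequentially_Suc[THEN iffD2])
  qed
  have meas_s: "s n \<in> borel_measurable lborel" for n
  proof -
    have "continuous_on UNIV (s n)"
      unfolding s_def[abs_def] EE_def aa_def by (intro continuous_intros) auto
    then show ?thesis by (simp add: borel_measurable_continuous_onI)
  qed
  have meas_f: "f \<in> borel_measurable lborel"
    by (rule borel_measurable_LIMSEQ_real[OF lim meas_s])
  have int_w: "integrable lborel w"
    unfolding w_def by (intro integrable_mult_right gauss_integrable kpos)
  have bound: "norm (s n z) \<le> w z" for n z
  proof -
    have "EE tau r (Suc n) z \<le> - gg (kinf tau * z) + r^2/2 + \<bar>r\<bar> * \<bar>z\<bar> / (1 - p tau)"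
      by (rule dominate[OF A]) simp
    also have "- gg (kinf tau * z) \<le> - ((k*z)^2/2 - \<bar>k*z\<bar>)"
      using gg_lower[of "k*z"] unfolding k_def by simp
    finally have "EE tau r (Suc n) z \<le> -(k^2/2) * z^2 + D * \<bar>z\<bar> + r^2/2"
      using kpos pb unfolding D_def by (simp add: abs_mult power_mult_distrib algebra_simps)
    also have "\<dots> \<le> -(k^2/4) * z^2 + D^2/k^2 + r^2/2" using quad_bound[OF kpos, of z D] by simp
    finally have "exp (EE tau r (Suc n) z) \<le> exp (-(k^2/4) * z^2 + D^2/k^2 + r^2/2)" by simp
    also have "\<dots> = w z" unfolding w_def C_def by (simp add: exp_add[symmetric] algebra_simps)
    finally show ?thesis unfolding s_def by simp
  qed
  have DCT: "(\<lambda>n. integral\<^sup>L lborel (s n)) \<longlonglongrightarrow> integral\<^sup>L lborel f"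
    by (rule integral_dominated_convergence[OF meas_f meas_s int_w])
       (use lim bound in auto)
  have e1: "integral\<^sup>L lborel (s n) = integral\<^sup>L lborel
            (\<lambda>z. exp (- real (Suc n) * GN tau cw (Suc n) (betacN tau cw (Suc n)) ((tau - 2) / (tau - 1))
                                     (z / real (Suc n) powr (1 / (tau - 1))) r))" for n
    unfolding s_def by (intro arg_cong[where f="integral\<^sup>L lborel"] ext integrand_eq[OF A, symmetric]) simp
  have e2: "integral\<^sup>L lborel f = integral\<^sup>L lborel
            (\<lambda>z. exp (z * r * sqrt (EW tau cw / nu tau cw)
                      - flim tau (sqrt (EW tau cw / nu tau cw) * z)))"
    unfolding f_def by (intro arg_cong[where f="integral\<^sup>L lborel"] ext) (simp add: target_eq[OF A])
  show ?thesis
    using DCT unfolding e1 e2 by (rule filterlim_sequentially_Suc[THEN iffD1])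
qed

end
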